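(* Let $S$ be a finite colored ordered set and let $(\sigma,v)\preceq(\pi,w)$ in $\mathcal Y(S)$. Write $\pi=(C_1,\dots,C_q)$, $w=w(1)\cdots w(q)$, and let $v_k$ be the restriction of the coloring $v$ to the blocks of $\sigma$ contained in $C_k$. Then there is an order isomorphism \[ \theta:[\sigma,\pi]\to Y_{v_1}^{w(1)}\times\cdots\times Y_{v_q}^{w(q)} \] (product order on the right) such that for each $\lambda\in[\sigma,\pi]$, $\lambda$ and $\theta(\lambda)=(\lambda_1,\dots,\lambda_q)$ are isomorphic colored ordered sets.
   Context: Fix a finite set of colors $\Gamma$. A colored ordered set is a finite linearly ordered set $S=(x_1<\dots<x_p)$ with a map $c_S:S\to\Gamma$, identified with the word $c_S(x_1)\cdots c_S(x_p)$; two are isomorphic if the (unique) order isomorphism between them preserves colors, i.e. they have the same color word. An (interval) partition of $S$ is a partition into nonempty blocks $B_1<\dots<B_q$ each of which is a set of consecutive elements. A colored partition $(\sigma,c_\sigma)$ of $S$ is an interval partition $\sigma=(B_1,\dots,B_q)$ together with a coloring $c_\sigma$ of its blocks such that every singleton block $\{x\}$ has color $c_S(x)$; it is regarded as the colored ordered set $(B_1<\dots<B_q)$ with coloring $c_\sigma$. $\mathcal Y(S)$ is the set of colored partitions of $S$, partially ordered by $(\sigma,v)\preceq(\pi,w)$ iff every block of $\sigma$ is contained in a block of $\pi$ and every block common to $\sigma$ and $\pi$ has the same color in both. $[\sigma,\pi]=\{\lambda:\sigma\preceq\lambda\preceq\pi\}$. For a word $v$ of length $p$ over $\Gamma$ and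 $j\in\Gamma$, consider $\mathcal Y(([p],v))$; let $\mathbf 0_v$ be the partition into singletons (colored by $v$) and $\mathbf 1_j$ the one-block partition colored $j$; $Y_v^j=[\mathbf 0_v,\mathbf 1_j]$. An element $\lambda_k\in Y_{v_k}^{w(k)}$ is a colored partition of the blocks of $\sigma$ inside $C_k$; $(\lambda_1,\dots,\lambda_q)$ is regarded as the colored ordered set obtained by concatenating the blocks of $\lambda_1,\dots,\lambda_q$ with their colors. *)

theory Defs
  imports Main
begin

text \<open>A colored ordered set is a finite set S of a linearly ordered type with a
coloring c. A colored (interval) partition is a list of blocks with colors
(B_1,c_1),...,(B_q,c_q), listed in increasing order; the blocks are nonempty,
consist of consecutive elements and cover S (all encoded by requiring that the
concatenation of the sorted blocks is the sorted list of S); singleton blocks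
carry the color of their element.\<close>

definition colored_partitions ::
  "'a::linorder set \<Rightarrow> ('a \<Rightarrow> 'c) \<Rightarrow> ('a set \<times> 'c) list set" where
  "colored_partitions S c =
     {P. (\<forall>(B, col) \<in> set P. finite B \<and> B \<noteq> {}) \<and>
         concat (map (\<lambda>(B, col). sorted_list_of_set B) P) = sorted_list_of_set S \<and>
         (\<forall>x col. (({x}, col) \<in> set P) \<longrightarrow> col = c x)}"

definition cprec :: "('a set \<times> 'c) list \<Rightarrow> ('a set \<times> 'c) list \<Rightarrow> bool" where
  "cprec P Q \<longleftrightarrow>
     (\<forall>(B, b) \<in> set P. \<exists>(C, d) \<in> set Q. B \<subseteq> C) \<and>
     (\<forall>B b d. (B, b) \<in> set P \<longrightarrow> (B, d) \<in> set Q \<longrightarrow> b = d)"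

definition cinterval ::
  "'a::linorder set \<Rightarrow> ('a \<Rightarrow> 'c) \<Rightarrow> ('a set \<times> 'c) list \<Rightarrow> ('a set \<times> 'c) list
     \<Rightarrow> ('a set \<times> 'c) list set" where
  "cinterval S c \<sigma> \<pi> = {L \<in> colored_partitions S c. cprec \<sigma> L \<and> cprec L \<pi>}"

definition cword :: "('a set \<times> 'c) list \<Rightarrow> 'c list" where
  "cword P = map snd P"

text \<open>For a word v of length p: 0_v, 1_j and Y_v^j = [0_v, 1_j] in Y(([p], v)),
with [p] = {0..<p}.\<close>
definition zero_part :: "'c list \<Rightarrow> (nat set \<times> 'c) list" where
  "zero_part v = map (\<lambda>i. ({i}, v ! i)) [0..<length v]"

definition one_part :: "'c list \<Rightarrow> 'c \<Rightarrow> (nat set \<times> 'c) list" where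
  "one_part v j = [({0..<length v}, j)]"

definition Yint :: "'c list \<Rightarrow> 'c \<Rightarrow> (nat set \<times> 'c) list set" where
  "Yint v j = cinterval {0..<length v} (\<lambda>i. v ! i) (zero_part v) (one_part v j)"

definition restr_word :: "('a set \<times> 'c) list \<Rightarrow> 'a set \<Rightarrow> 'c list" where
  "restr_word \<sigma> C = map snd (filter (\<lambda>(B, b). B \<subseteq> C) \<sigma>)"

definition Yprod :: "('a set \<times> 'c) list \<Rightarrow> ('a set \<times> 'c) list \<Rightarrow> (nat set \<times> 'c) list list set" where
  "Yprod \<sigma> \<pi> = {ls. length ls = length \<pi> \<and>
      (\<forall>k < length \<pi>. ls ! k \<in> Yint (restr_word \<sigma> (fst (\<pi> ! k))) (snd (\<pi> ! k)))}"

end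

theory Submission
  imports Defs
begin


definition before :: "'a::linorder set \<times> 'c \<Rightarrow> 'a set \<times> 'c \<Rightarrow> bool" where
  "before p q \<longleftrightarrow> (\<forall>x\<in>fst p. \<forall>y\<in>fst q. x < y)"

definition part :: "'a::linorder set \<Rightarrow> ('a set \<times> 'c) list \<Rightarrow> bool" where
  "part S P \<longleftrightarrow> (\<forall>p\<in>set P. finite (fst p) \<and> fst p \<noteq> {}) \<and> \<Union>(fst ` set P) = S \<and> sorted_wrt before P"

definition sc :: "('a \<Rightarrow> 'c) \<Rightarrow> ('a set \<times> 'c) list \<Rightarrow> bool" where
  "sc c P \<longleftrightarrow> (\<forall>x col. ({x}, col) \<in> set P \<longrightarrow> col = c x)"

lemma sorted_wrt_concat:
  "sorted_wrt R (concat xss) \<longleftrightarrow> (\<forall>xs\<in>set xss. sorted_wrt R xs) \<and>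
     sorted_wrt (\<lambda>xs ys. \<forall>x\<in>set xs. \<forall>y\<in>set ys. R x y) xss"
  by (induction xss) (auto simp: sorted_wrt_append)

lemma cp_iff:
  assumes "finite S"
  shows "P \<in> colored_partitions S c \<longleftrightarrow> part S P \<and> sc c P"
proof -
  let ?xss = "map (\<lambda>(B, col). sorted_list_of_set B) P"
  have xss: "?xss = map (\<lambda>p. sorted_list_of_set (fst p)) P" by (auto simp: case_prod_beta)
  show ?thesis
  proof
    assume a: "P \<in> colored_partitions S c"
    hence fin: "\<forall>p\<in>set P. finite (fst p) \<and> fst p \<noteq> {}" and eq: "concat ?xss = sorted_list_of_set S"
      and s: "sc c P"
      by (auto simp: colored_partitions_def sc_def)
    have "sorted_wrt (<) (concat ?xss)" using eq by simp
    hence "sorted_wrt (\<lambda>xs ys. \<forall>x\<in>set xs. \<forall>y\<in>set ys. x < y) ?xss"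
      by (simp add: sorted_wrt_concat)
    hence "sorted_wrt before P" unfolding xss sorted_wrt_map
      by (rule sorted_wrt_mono_rel[rotated]) (use fin in \<open>auto simp: before_def\<close>)
    moreover have "set (concat ?xss) = S" using eq assms by simp
    hence "\<Union>(fst ` set P) = S" unfolding xss using fin by auto
    ultimately show "part S P \<and> sc c P" using fin s by (simp add: part_def)
  next
    assume a: "part S P \<and> sc c P"
    hence fin: "\<forall>p\<in>set P. finite (fst p) \<and> fst p \<noteq> {}" and un: "\<Union>(fst ` set P) = S"
      and sb: "sorted_wrt before P" and s: "sc c P"
      by (auto simp: part_def)
    have "sorted_wrt (\<lambda>xs ys. \<forall>x\<in>set xs. \<forall>y\<in>set ys. x < y) ?xss"
      unfolding xss sorted_wrt_map
      by (rule sorted_wrt_mono_rel[OF _ sb]) (use fin in \<open>auto simp: before_def\<close>)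
    hence "sorted_wrt (<) (concat ?xss)" by (simp add: sorted_wrt_concat xss)
    moreover have "set (concat ?xss) = S" unfolding xss using fin un by auto
    ultimately have "concat ?xss = sorted_list_of_set S"
      using assms by (intro strict_sorted_equal) simp_all
    thus "P \<in> colored_partitions S c" using fin s by (auto simp: colored_partitions_def sc_def)
  qed
qed

lemma part_inter:
  assumes "sorted_wrt before P" "p \<in> set P" "q \<in> set P" "x \<in> fst p" "x \<in> fst q"
  shows "p = q"
proof -
  obtain i j where i: "i < length P" "P ! i = p" and j: "j < length P" "P ! j = q"
    using assms by (auto simp: in_set_conv_nth)
  have "\<not> i < j" using sorted_wrt_nth_less[OF assms(1), of i j] i j assms by (auto simp: before_def)
  moreover have "\<not> j < i" using sorted_wrt_nth_less[OF assms(1), of j i] i j assms by (auto simp: before_def)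
  ultimately show ?thesis using i j by auto
qed

lemma part_inter_nth:
  assumes "sorted_wrt before P" "i < length P" "j < length P" "x \<in> fst (P ! i)" "x \<in> fst (P ! j)"
  shows "i = j"
proof -
  have "\<not> i < j" using sorted_wrt_nth_less[OF assms(1), of i j] assms by (auto simp: before_def)
  moreover have "\<not> j < i" using sorted_wrt_nth_less[OF assms(1), of j i] assms by (auto simp: before_def)
  ultimately show ?thesis by auto
qed



lemma cprec_alt:
  "cprec P Q \<longleftrightarrow> (\<forall>p\<in>set P. \<exists>q\<in>set Q. fst p \<subseteq> fst q) \<and>
     (\<forall>p\<in>set P. \<forall>q\<in>set Q. fst p = fst q \<longrightarrow> snd p = snd q)"
  unfolding cprec_def by (auto simp: case_prod_beta)

lemma filter_split:
  "sorted_wrt R xs \<Longrightarrow> (\<forall>x\<in>set xs. \<forall>y\<in>set xs. R x y \<longrightarrow> Q y \<longrightarrow> Q x) \<Longrightarrow>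
    filter Q xs @ filter (\<lambda>x. \<not> Q x) xs = xs"
proof (induction xs)
  case Nil
  then show ?case by simp
next
  case (Cons x xs)
  show ?case
  proof (cases "Q x")
    case True
    then show ?thesis using Cons by simp
  next
    case False
    then have "\<forall>y\<in>set xs. \<not> Q y" using Cons.prems by auto
    then show ?thesis using False by (simp add: filter_id_conv)
  qed
qed

definition flt :: "'a set \<Rightarrow> ('a set \<times> 'c) list \<Rightarrow> ('a set \<times> 'c) list" where
  "flt C L = filter (\<lambda>p. fst p \<subseteq> C) L"

lemma split_concat:
  assumes "sorted_wrt before Q" "sorted_wrt before L" "\<forall>q\<in>set L. fst q \<noteq> {}"
    "\<forall>q\<in>set L. \<exists>p\<in>set Q. fst q \<subseteq> fst p"
  shows "concat (map (\<lambda>p. flt (fst p) L) Q) = L"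
  using assms
proof (induction Q arbitrary: L)
  case Nil
  then show ?case by (cases L) auto
next
  case (Cons p Q)
  define C where "C = fst p"
  define L2 where "L2 = filter (\<lambda>q. \<not> fst q \<subseteq> C) L"
  have bef: "\<forall>p'\<in>set Q. before p p'" using Cons.prems(1) by simp
  have pref: "flt C L @ L2 = L"
    unfolding flt_def L2_def
  proof (rule filter_split[OF Cons.prems(2)], intro ballI impI)
    fix x y assume xy: "x \<in> set L" "y \<in> set L" "before x y" "fst y \<subseteq> C"
    obtain p' where p': "p' \<in> set (p # Q)" "fst x \<subseteq> fst p'" using Cons.prems(4) xy by blast
    show "fst x \<subseteq> C"
    proof (cases "p' = p")
      case True then show ?thesis using p' C_def by simp
    next
      case False
      hence "before p p'" using p' bef by auto
      moreover obtain a where "a \<in> fst x" using Cons.prems(3) xy by fastforce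
      moreover obtain b where "b \<in> fst y" using Cons.prems(3) xy by fastforce
      ultimately show ?thesis using xy p' C_def by (auto simp: before_def) (meson less_asym subsetD)
    qed
  qed
  have eq: "flt (fst p') L = flt (fst p') L2" if "p' \<in> set Q" for p'
  proof -
    have "\<And>q. q \<in> set L \<Longrightarrow> fst q \<subseteq> fst p' \<Longrightarrow> \<not> fst q \<subseteq> C"
    proof
      fix q assume q: "q \<in> set L" "fst q \<subseteq> fst p'" "fst q \<subseteq> C"
      obtain a where "a \<in> fst q" using Cons.prems(3) q by fastforce
      then show False using bef that q C_def by (auto simp: before_def)
    qed
    then show ?thesis unfolding flt_def L2_def by (auto simp: filter_filter intro!: filter_cong)
  qed
  have IH: "concat (map (\<lambda>p. flt (fst p) L2) Q) = L2"
  proof (rule Cons.IH)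
    show "sorted_wrt before Q" using Cons.prems(1) by simp
    show "sorted_wrt before L2" unfolding L2_def using Cons.prems(2) by (rule sorted_wrt_filter)
    show "\<forall>q\<in>set L2. fst q \<noteq> {}" using Cons.prems(3) L2_def by auto
    show "\<forall>q\<in>set L2. \<exists>p\<in>set Q. fst q \<subseteq> fst p" using Cons.prems(4) L2_def C_def by fastforce
  qed
  have mapeq: "map (\<lambda>p. flt (fst p) L) Q = map (\<lambda>p. flt (fst p) L2) Q"
    by (rule map_cong) (simp_all add: eq)
  have "concat (map (\<lambda>p. flt (fst p) L) (p # Q)) = flt C L @ concat (map (\<lambda>p. flt (fst p) L) Q)"
    using C_def by simp
  also have "\<dots> = flt C L @ L2" unfolding mapeq IH ..
  finally show ?case using pref by simp
qed

definition img :: "('a set \<times> 'c) list \<Rightarrow> 'a set \<Rightarrow> nat set" where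
  "img s D = {i. i < length s \<and> fst (s ! i) \<subseteq> D}"

definition pre :: "('a set \<times> 'c) list \<Rightarrow> nat set \<Rightarrow> 'a set" where
  "pre s E = (\<Union>i\<in>{i\<in>E. i < length s}. fst (s ! i))"

definition Phi :: "('a set \<times> 'c) list \<Rightarrow> ('a set \<times> 'c) list \<Rightarrow> (nat set \<times> 'c) list" where
  "Phi s L = map (\<lambda>p. (img s (fst p), snd p)) L"

definition Psi :: "('a set \<times> 'c) list \<Rightarrow> (nat set \<times> 'c) list \<Rightarrow> ('a set \<times> 'c) list" where
  "Psi s M = map (\<lambda>p. (pre s (fst p), snd p)) M"

definition LI :: "('a::linorder set \<times> 'c) list \<Rightarrow> 'a set \<Rightarrow> ('a \<Rightarrow> 'c) \<Rightarrow> 'c \<Rightarrow> ('a set \<times> 'c) list set" where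
  "LI s C c d = {L. part C L \<and> sc c L \<and> cprec s L \<and> cprec L [(C, d)]}"

lemma Yint_iff:
  "M \<in> Yint v d \<longleftrightarrow> part {0..<length v} M \<and> sc (\<lambda>i. v ! i) M \<and>
     cprec (zero_part v) M \<and> cprec M (one_part v d)"
  unfolding Yint_def cinterval_def by (simp add: cp_iff)



context
  fixes s :: "('a::linorder set \<times> 'c) list" and C :: "'a set" and c :: "'a \<Rightarrow> 'c"
  assumes ps: "part C s" and ss: "sc c s"
begin

lemma bl_ne: "i < length s \<Longrightarrow> fst (s ! i) \<noteq> {}"
  using ps nth_mem unfolding part_def by blast

lemma bl_fin: "i < length s \<Longrightarrow> finite (fst (s ! i))"
  using ps nth_mem unfolding part_def by blast

lemma bl_sub: "i < length s \<Longrightarrow> fst (s ! i) \<subseteq> C"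
  using ps nth_mem unfolding part_def by blast

lemma bl_cover: "x \<in> C \<Longrightarrow> \<exists>i<length s. x \<in> fst (s ! i)"
proof -
  assume "x \<in> C"
  then obtain p where "p \<in> set s" "x \<in> fst p" using ps unfolding part_def by blast
  then show ?thesis by (metis in_set_conv_nth)
qed

lemma bl_disj: "i < length s \<Longrightarrow> j < length s \<Longrightarrow> x \<in> fst (s ! i) \<Longrightarrow> x \<in> fst (s ! j) \<Longrightarrow> i = j"
  using ps part_inter_nth unfolding part_def by blast

lemma bl_ord: "i < j \<Longrightarrow> j < length s \<Longrightarrow> x \<in> fst (s ! i) \<Longrightarrow> y \<in> fst (s ! j) \<Longrightarrow> x < y"
  using ps sorted_wrt_nth_less unfolding part_def before_def by blast

lemma img_pre: "E \<subseteq> {..<length s} \<Longrightarrow> img s (pre s E) = E"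
proof
  assume E: "E \<subseteq> {..<length s}"
  show "E \<subseteq> img s (pre s E)" using E unfolding img_def pre_def by auto
  show "img s (pre s E) \<subseteq> E"
  proof
    fix i assume "i \<in> img s (pre s E)"
    hence i: "i < length s" "fst (s ! i) \<subseteq> pre s E" unfolding img_def by auto
    obtain x where x: "x \<in> fst (s ! i)" using bl_ne[OF i(1)] by blast
    then obtain j where "j \<in> E" "j < length s" "x \<in> fst (s ! j)" using i unfolding pre_def by blast
    then show "i \<in> E" using bl_disj[OF i(1), of j x] x by simp
  qed
qed

lemma img_single: "i < length s \<Longrightarrow> img s (fst (s ! i)) = {i}"
proof -
  assume i: "i < length s"
  have "j = i" if j: "j < length s" "fst (s ! j) \<subseteq> fst (s ! i)" for j
  proof -
    obtain x where "x \<in> fst (s ! j)" using bl_ne[OF j(1)] by blast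
    then show ?thesis using bl_disj[OF j(1) i] j by blast
  qed
  then show ?thesis using i unfolding img_def by auto
qed

lemma img_C: "img s C = {0..<length s}"
  using bl_sub unfolding img_def by fastforce

lemma pre_all: "pre s {0..<length s} = C"
proof
  show "pre s {0..<length s} \<subseteq> C"
  proof
    fix x assume "x \<in> pre s {0..<length s}"
    then obtain i where i: "i < length s" "x \<in> fst (s ! i)" unfolding pre_def by auto
    show "x \<in> C" using bl_sub[OF i(1)] i(2) by blast
  qed
  show "C \<subseteq> pre s {0..<length s}" unfolding pre_def using bl_cover by fastforce
qed

lemma sat:
  assumes "part C L" "cprec s L" "q \<in> set L"
  shows "pre s (img s (fst q)) = fst q"
proof
  show "pre s (img s (fst q)) \<subseteq> fst q" unfolding pre_def img_def by auto
  show "fst q \<subseteq> pre s (img s (fst q))"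
  proof
    fix x assume x: "x \<in> fst q"
    hence "x \<in> C" using assms(1,3) unfolding part_def by blast
    then obtain i where i: "i < length s" "x \<in> fst (s ! i)" using bl_cover by blast
    then obtain q' where q': "q' \<in> set L" "fst (s ! i) \<subseteq> fst q'"
      using assms(2) nth_mem unfolding cprec_alt by blast
    have "q' = q" using part_inter[of L q' q x] assms q' x i unfolding part_def by blast
    then show "x \<in> pre s (img s (fst q))" using q' i unfolding pre_def img_def by blast
  qed
qed

lemma img_mono: "D \<subseteq> D' \<Longrightarrow> img s D \<subseteq> img s D'"
  unfolding img_def by auto

lemma pre_mono: "E \<subseteq> E' \<Longrightarrow> pre s E \<subseteq> pre s E'"
  unfolding pre_def by auto

end


lemma zp: "p \<in> set (zero_part v) \<longleftrightarrow> (\<exists>i<length v. p = ({i}, v ! i))"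
  by (auto simp: zero_part_def)

context
  fixes s :: "('a::linorder set \<times> 'c) list" and C :: "'a set" and c :: "'a \<Rightarrow> 'c"
  assumes ps: "part C s" and ss: "sc c s"
begin

lemma phi_in:
  assumes L: "L \<in> LI s C c d"
  shows "Phi s L \<in> Yint (map snd s) d"
proof -
  from L have pL: "part C L" and scL: "sc c L" and c1: "cprec s L" and c2: "cprec L [(C,d)]"
    by (auto simp: LI_def)
  let ?m = "length s"
  have satq: "\<And>q. q \<in> set L \<Longrightarrow> pre s (img s (fst q)) = fst q" using sat[OF ps ss pL c1] .
  have imgsub: "img s D \<subseteq> {0..<?m}" for D by (auto simp: img_def)
  have bef: "before (img s (fst q), snd q) (img s (fst q'), snd q')"
    if q: "q \<in> set L" "q' \<in> set L" "before q q'" for q q'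
    unfolding before_def fst_conv
  proof (intro ballI)
    fix i j assume ij: "i \<in> img s (fst q)" "j \<in> img s (fst q')"
    hence i: "i < ?m" "fst (s!i) \<subseteq> fst q" and j: "j < ?m" "fst (s!j) \<subseteq> fst q'"
      by (auto simp: img_def)
    obtain x where x: "x \<in> fst (s!i)" using bl_ne[OF ps ss i(1)] by blast
    obtain y where y: "y \<in> fst (s!j)" using bl_ne[OF ps ss j(1)] by blast
    have xy: "x < y" using q(3) x y i j by (auto simp: before_def)
    show "i < j"
    proof (rule ccontr)
      assume "\<not> i < j"
      hence "j < i \<or> j = i" by auto
      then show False
      proof
        assume "j < i" then have "y < x" using bl_ord[OF ps ss _ i(1) y x] by simp
        then show False using xy by simp
      next
        assume "j = i" then have "x \<in> fst q'" using x j by auto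
        then show False using q(3) x i by (auto simp: before_def)
      qed
    qed
  qed
  have part: "part {0..<?m} (Phi s L)"
    unfolding part_def
  proof (intro conjI)
    show "\<forall>p\<in>set (Phi s L). finite (fst p) \<and> fst p \<noteq> {}"
    proof
      fix p assume "p \<in> set (Phi s L)"
      then obtain q where q: "q \<in> set L" "p = (img s (fst q), snd q)" by (auto simp: Phi_def)
      have "fst q \<noteq> {}" using pL q(1) by (auto simp: part_def)
      hence "img s (fst q) \<noteq> {}" using satq[OF q(1)] by (auto simp: pre_def)
      moreover have "finite (img s (fst q))" using imgsub finite_subset by blast
      ultimately show "finite (fst p) \<and> fst p \<noteq> {}" using q by simp
    qed
    show "\<Union>(fst ` set (Phi s L)) = {0..<?m}"
    proof
      show "\<Union>(fst ` set (Phi s L)) \<subseteq> {0..<?m}" by (auto simp: Phi_def img_def)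
      show "{0..<?m} \<subseteq> \<Union>(fst ` set (Phi s L))"
      proof
        fix i assume "i \<in> {0..<?m}"
        hence i: "i < ?m" by simp
        then obtain q where q: "q \<in> set L" "fst (s!i) \<subseteq> fst q"
          using c1 nth_mem unfolding cprec_alt by blast
        hence "i \<in> img s (fst q)" "(img s (fst q), snd q) \<in> set (Phi s L)"
          using i by (auto simp: img_def Phi_def)
        then show "i \<in> \<Union>(fst ` set (Phi s L))" by force
      qed
    qed
    have sL: "sorted_wrt before L" using pL by (simp add: part_def)
    show "sorted_wrt before (Phi s L)"
      unfolding Phi_def sorted_wrt_map
      by (rule sorted_wrt_mono_rel[OF _ sL]) (auto intro: bef)
  qed
  have scP: "sc (\<lambda>i. map snd s ! i) (Phi s L)"
    unfolding sc_def
  proof (intro allI impI)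
    fix i col assume "({i}, col) \<in> set (Phi s L)"
    then obtain q where q: "q \<in> set L" "img s (fst q) = {i}" "snd q = col" by (auto simp: Phi_def)
    have i: "i < ?m" using q(2) by (auto simp: img_def)
    have "pre s {i} = fst (s!i)" using i by (auto simp: pre_def)
    hence "fst q = fst (s!i)" using satq[OF q(1)] q(2) by simp
    hence "snd (s!i) = snd q" using c1 q(1) nth_mem[OF i] unfolding cprec_alt by metis
    then show "col = map snd s ! i" using q i by simp
  qed
  have z: "cprec (zero_part (map snd s)) (Phi s L)"
    unfolding cprec_alt
  proof (intro conjI ballI impI)
    fix p assume "p \<in> set (zero_part (map snd s))"
    then obtain i where i: "i < ?m" "p = ({i}, snd (s!i))" by (auto simp: zp)
    from part have "i \<in> \<Union>(fst ` set (Phi s L))" unfolding part_def using i by auto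
    then show "\<exists>q\<in>set (Phi s L). fst p \<subseteq> fst q" using i by auto
  next
    fix p q assume p: "p \<in> set (zero_part (map snd s))" and q: "q \<in> set (Phi s L)" and e: "fst p = fst q"
    then obtain i where i: "i < ?m" "p = ({i}, snd (s!i))" by (auto simp: zp)
    have "({i}, snd q) \<in> set (Phi s L)" using q e i by (metis fst_conv prod.collapse)
    then have "snd q = map snd s ! i" by (rule mp[OF spec[OF spec[OF scP[unfolded sc_def]]]])
    then show "snd p = snd q" using i by simp
  qed
  have o: "cprec (Phi s L) (one_part (map snd s) d)"
    unfolding cprec_alt one_part_def
  proof (intro conjI ballI impI)
    fix p assume "p \<in> set (Phi s L)"
    then show "\<exists>q\<in>set [({0..<length (map snd s)}, d)]. fst p \<subseteq> fst q"
      by (auto simp: Phi_def img_def)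
  next
    fix p q assume p: "p \<in> set (Phi s L)" and q: "q \<in> set [({0..<length (map snd s)}, d)]"
      and e: "fst p = fst q"
    obtain q0 where q0: "q0 \<in> set L" "p = (img s (fst q0), snd q0)" using p by (auto simp: Phi_def)
    have "img s (fst q0) = {0..<?m}" using e q q0 by simp
    hence "fst q0 = C" using satq[OF q0(1)] pre_all[OF ps ss] by simp
    hence "snd q0 = d" using c2 q0(1) unfolding cprec_alt by auto
    then show "snd p = snd q" using q q0 by simp
  qed
  show ?thesis unfolding Yint_iff using part scP z o by simp
qed

lemma psi_phi:
  assumes L: "L \<in> LI s C c d"
  shows "Psi s (Phi s L) = L"
proof -
  from L have pL: "part C L" and c1: "cprec s L" by (auto simp: LI_def)
  show ?thesis unfolding Psi_def Phi_def map_map o_def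
    by (rule map_idI) (simp add: sat[OF ps ss pL c1])
qed

lemma order_iso:
  assumes L: "L \<in> LI s C c d" and M: "M \<in> LI s C c d"
  shows "cprec L M \<longleftrightarrow> cprec (Phi s L) (Phi s M)"
proof -
  from L have pL: "part C L" and c1: "cprec s L" by (auto simp: LI_def)
  from M have pM: "part C M" and c1M: "cprec s M" by (auto simp: LI_def)
  note satL = sat[OF ps ss pL c1] and satM = sat[OF ps ss pM c1M]
  show ?thesis
  proof
    assume a: "cprec L M"
    show "cprec (Phi s L) (Phi s M)"
      unfolding cprec_alt
    proof (intro conjI ballI impI)
      fix p assume "p \<in> set (Phi s L)"
      then obtain q where q: "q \<in> set L" "p = (img s (fst q), snd q)" by (auto simp: Phi_def)
      then obtain q' where q': "q' \<in> set M" "fst q \<subseteq> fst q'" using a unfolding cprec_alt by blast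
      have "(img s (fst q'), snd q') \<in> set (Phi s M)" using q' by (auto simp: Phi_def)
      moreover have "img s (fst q) \<subseteq> img s (fst q')" using q'(2) by (rule img_mono[OF ps ss])
      ultimately show "\<exists>p'\<in>set (Phi s M). fst p \<subseteq> fst p'" using q by force
    next
      fix p p' assume p: "p \<in> set (Phi s L)" and p': "p' \<in> set (Phi s M)" and e: "fst p = fst p'"
      obtain q where q: "q \<in> set L" "p = (img s (fst q), snd q)" using p by (auto simp: Phi_def)
      obtain q' where q': "q' \<in> set M" "p' = (img s (fst q'), snd q')" using p' by (auto simp: Phi_def)
      have "fst q = pre s (img s (fst q))" using satL[OF q(1)] by simp
      also have "\<dots> = pre s (img s (fst q'))" using e q q' by simp
      also have "\<dots> = fst q'" using satM[OF q'(1)] by simp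
      finally have "fst q = fst q'" .
      then have "snd q = snd q'" using a q q' unfolding cprec_alt by blast
      then show "snd p = snd p'" using q q' by simp
    qed
  next
    assume a: "cprec (Phi s L) (Phi s M)"
    show "cprec L M"
      unfolding cprec_alt
    proof (intro conjI ballI impI)
      fix q assume q: "q \<in> set L"
      hence "(img s (fst q), snd q) \<in> set (Phi s L)" by (auto simp: Phi_def)
      hence "\<exists>p'\<in>set (Phi s M). fst (img s (fst q), snd q) \<subseteq> fst p'"
        using conjunct1[OF a[unfolded cprec_alt]] by blast
      then obtain p' where p': "p' \<in> set (Phi s M)" "img s (fst q) \<subseteq> fst p'" by auto
      obtain q' where q': "q' \<in> set M" "p' = (img s (fst q'), snd q')" using p' by (auto simp: Phi_def)
      have "pre s (img s (fst q)) \<subseteq> pre s (img s (fst q'))" using p'(2) q'(2) pre_mono[OF ps ss, of "img s (fst q)" "img s (fst q')"] by simp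
      hence "fst q \<subseteq> fst q'" unfolding satL[OF q] satM[OF q'(1)] .
      then show "\<exists>q'\<in>set M. fst q \<subseteq> fst q'" using q' by blast
    next
      fix q q' assume q: "q \<in> set L" and q': "q' \<in> set M" and e: "fst q = fst q'"
      have P1: "(img s (fst q), snd q) \<in> set (Phi s L)" using q by (auto simp: Phi_def)
      have P2: "(img s (fst q), snd q') \<in> set (Phi s M)" using q' e by (auto simp: Phi_def)
      have "snd (img s (fst q), snd q) = snd (img s (fst q), snd q')"
        using conjunct2[OF a[unfolded cprec_alt], rule_format, OF P1 P2] by simp
      then show "snd q = snd q'" by simp
    qed
  qed
qed

end


context
  fixes s :: "('a::linorder set \<times> 'c) list" and C :: "'a set" and c :: "'a \<Rightarrow> 'c"
  assumes ps: "part C s" and ss: "sc c s"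
begin

lemma psi_in:
  assumes M: "M \<in> Yint (map snd s) d"
  shows "Psi s M \<in> LI s C c d" and "Phi s (Psi s M) = M"
proof -
  let ?m = "length s"
  from M have pM: "part {0..<?m} M" and scM: "sc (\<lambda>i. map snd s ! i) M"
    and c2M: "cprec M (one_part (map snd s) d)" unfolding Yint_iff by auto
  have Esub: "fst p \<subseteq> {..<?m}" if "p \<in> set M" for p
    using pM that unfolding part_def by auto
  have Ene: "fst p \<noteq> {}" if "p \<in> set M" for p
    using pM that unfolding part_def by auto
  have ip: "img s (pre s (fst p)) = fst p" if "p \<in> set M" for p
    using img_pre[OF ps ss Esub[OF that]] .
  have scM': "col = snd (s ! i)" if "({i}, col) \<in> set M" for i col
  proof -
    have "i < ?m" using Esub[OF that] by auto
    moreover have "col = map snd s ! i" by (rule mp[OF spec[OF spec[OF scM[unfolded sc_def]]] that])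
    ultimately show ?thesis by simp
  qed
  have cover: "\<exists>q\<in>set M. i \<in> fst q" if "i < ?m" for i
  proof -
    have "i \<in> \<Union>(fst ` set M)" using pM that unfolding part_def by auto
    then show ?thesis by auto
  qed
  show "Phi s (Psi s M) = M"
    unfolding Phi_def Psi_def map_map o_def
    by (rule map_idI) (simp add: ip)
  have pP: "part C (Psi s M)"
    unfolding part_def
  proof (intro conjI)
    show "\<forall>p\<in>set (Psi s M). finite (fst p) \<and> fst p \<noteq> {}"
    proof
      fix p assume "p \<in> set (Psi s M)"
      then obtain q where q: "q \<in> set M" "p = (pre s (fst q), snd q)" by (auto simp: Psi_def)
      have "finite (pre s (fst q))" unfolding pre_def
        by (rule finite_UN_I) (auto intro: bl_fin[OF ps ss])
      moreover have "pre s (fst q) \<noteq> {}"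
      proof -
        obtain i where i: "i \<in> fst q" using Ene[OF q(1)] by blast
        hence i2: "i < ?m" using Esub[OF q(1)] by auto
        obtain x where "x \<in> fst (s ! i)" using bl_ne[OF ps ss i2] by blast
        then show ?thesis using i i2 unfolding pre_def by blast
      qed
      ultimately show "finite (fst p) \<and> fst p \<noteq> {}" using q by simp
    qed
    show "\<Union>(fst ` set (Psi s M)) = C"
    proof
      show "\<Union>(fst ` set (Psi s M)) \<subseteq> C"
      proof
        fix x assume "x \<in> \<Union>(fst ` set (Psi s M))"
        then obtain q where "q \<in> set M" "x \<in> pre s (fst q)" by (auto simp: Psi_def)
        then obtain i where i: "i < ?m" "x \<in> fst (s ! i)" unfolding pre_def by auto
        show "x \<in> C" using bl_sub[OF ps ss i(1)] i(2) by blast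
      qed
      show "C \<subseteq> \<Union>(fst ` set (Psi s M))"
      proof
        fix x assume "x \<in> C"
        then obtain i where i: "i < ?m" "x \<in> fst (s ! i)" using bl_cover[OF ps ss] by blast
        then obtain q where q: "q \<in> set M" "i \<in> fst q" using cover by blast
        have "x \<in> pre s (fst q)" using i q unfolding pre_def by blast
        moreover have "(pre s (fst q), snd q) \<in> set (Psi s M)" using q by (auto simp: Psi_def)
        ultimately show "x \<in> \<Union>(fst ` set (Psi s M))" by force
      qed
    qed
    have bef: "before (pre s (fst q), snd q) (pre s (fst q'), snd q')"
      if q: "q \<in> set M" "q' \<in> set M" "before q q'" for q q'
      unfolding before_def fst_conv
    proof (intro ballI)
      fix x y assume "x \<in> pre s (fst q)" "y \<in> pre s (fst q')"
      then obtain i j where i: "i \<in> fst q" "i < ?m" "x \<in> fst (s ! i)"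
        and j: "j \<in> fst q'" "j < ?m" "y \<in> fst (s ! j)" unfolding pre_def by auto
      have "i < j" using q(3) i j by (auto simp: before_def)
      then show "x < y" using bl_ord[OF ps ss _ j(2) i(3) j(3)] by simp
    qed
    have sM: "sorted_wrt before M" using pM by (simp add: part_def)
    show "sorted_wrt before (Psi s M)"
      unfolding Psi_def sorted_wrt_map
      by (rule sorted_wrt_mono_rel[OF _ sM]) (auto intro: bef)
  qed
  have single: "fst q = {i}" if q: "q \<in> set M" "i < ?m" "pre s (fst q) = fst (s ! i)" for q i
  proof -
    have "fst q = img s (pre s (fst q))" using ip[OF q(1)] by simp
    also have "\<dots> = {i}" using q(3) img_single[OF ps ss q(2)] by simp
    finally show ?thesis .
  qed
  have scP: "sc c (Psi s M)"
    unfolding sc_def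
  proof (intro allI impI)
    fix x col assume "({x}, col) \<in> set (Psi s M)"
    then obtain q where q: "q \<in> set M" "pre s (fst q) = {x}" "snd q = col" by (auto simp: Psi_def)
    obtain i where i: "i \<in> fst q" using Ene[OF q(1)] by blast
    hence i2: "i < ?m" using Esub[OF q(1)] by auto
    have "fst (s ! i) \<subseteq> {x}" using q(2) i i2 unfolding pre_def by blast
    hence bi: "fst (s ! i) = {x}" using bl_ne[OF ps ss i2] by blast
    have "fst q = {i}" using single[OF q(1) i2] q(2) bi by simp
    hence "({i}, col) \<in> set M" using q by (metis prod.collapse)
    hence "col = snd (s ! i)" by (rule scM')
    moreover have "({x}, snd (s ! i)) \<in> set s" using nth_mem[OF i2] bi by (metis prod.collapse)
    ultimately show "col = c x" using ss unfolding sc_def by blast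
  qed
  have c1: "cprec s (Psi s M)"
    unfolding cprec_alt
  proof (intro conjI ballI impI)
    fix p assume "p \<in> set s"
    then obtain i where i: "i < ?m" "p = s ! i" by (auto simp: in_set_conv_nth)
    then obtain q where q: "q \<in> set M" "i \<in> fst q" using cover by blast
    have "fst p \<subseteq> pre s (fst q)" using i q unfolding pre_def by auto
    moreover have "(pre s (fst q), snd q) \<in> set (Psi s M)" using q by (auto simp: Psi_def)
    ultimately show "\<exists>q\<in>set (Psi s M). fst p \<subseteq> fst q" by (intro bexI[where x="(pre s (fst q), snd q)"]) simp_all
  next
    fix p p' assume p: "p \<in> set s" and p': "p' \<in> set (Psi s M)" and e: "fst p = fst p'"
    then obtain i where i: "i < ?m" "p = s ! i" by (auto simp: in_set_conv_nth)
    obtain q where q: "q \<in> set M" "p' = (pre s (fst q), snd q)" using p' by (auto simp: Psi_def)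
    have "fst q = {i}" using single[OF q(1) i(1)] e i q by simp
    hence "({i}, snd q) \<in> set M" using q by (metis prod.collapse)
    hence "snd q = snd (s ! i)" by (rule scM')
    then show "snd p = snd p'" using i q by simp
  qed
  have c2: "cprec (Psi s M) [(C, d)]"
    unfolding cprec_alt
  proof (intro conjI ballI impI)
    fix p assume "p \<in> set (Psi s M)"
    hence "fst p \<subseteq> C" using pP unfolding part_def by blast
    then show "\<exists>q\<in>set [(C, d)]. fst p \<subseteq> fst q" by simp
  next
    fix p p' assume p: "p \<in> set (Psi s M)" and p': "p' \<in> set [(C, d)]" and e: "fst p = fst p'"
    obtain q where q: "q \<in> set M" "p = (pre s (fst q), snd q)" using p by (auto simp: Psi_def)
    have "fst q = img s (pre s (fst q))" using ip[OF q(1)] by simp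
    also have "\<dots> = img s C" using e p' q by simp
    also have "\<dots> = {0..<?m}" using img_C[OF ps ss] .
    finally have fq: "fst q = {0..<length (map snd s)}" by simp
    have "(fst q, d) \<in> set (one_part (map snd s) d)" using fq by (simp add: one_part_def)
    hence "snd q = d" using conjunct2[OF c2M[unfolded cprec_alt], rule_format, OF q(1)] by simp
    then show "snd p = snd p'" using q p' by simp
  qed
  show "Psi s M \<in> LI s C c d" unfolding LI_def using pP scP c1 c2 by simp
qed

end


lemma restrict_part:
  assumes P: "part S P" and Q: "part S Q" and ref: "\<forall>p\<in>set P. \<exists>q\<in>set Q. fst p \<subseteq> fst q"
    and r: "r \<in> set Q"
  shows "part (fst r) (flt (fst r) P)"
  unfolding part_def
proof (intro conjI)
  show "\<forall>p\<in>set (flt (fst r) P). finite (fst p) \<and> fst p \<noteq> {}"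
    using P unfolding part_def flt_def by auto
  show "sorted_wrt before (flt (fst r) P)"
    using P unfolding part_def flt_def by (auto intro: sorted_wrt_filter)
  show "\<Union>(fst ` set (flt (fst r) P)) = fst r"
  proof
    show "\<Union>(fst ` set (flt (fst r) P)) \<subseteq> fst r" unfolding flt_def by auto
    show "fst r \<subseteq> \<Union>(fst ` set (flt (fst r) P))"
    proof
      fix x assume x: "x \<in> fst r"
      hence "x \<in> S" using Q r unfolding part_def by blast
      then obtain p where p: "p \<in> set P" "x \<in> fst p" using P unfolding part_def by blast
      then obtain q where q: "q \<in> set Q" "fst p \<subseteq> fst q" using ref by blast
      have "q = r" using part_inter[of Q q r x] Q q r p x unfolding part_def by blast
      then have "p \<in> set (flt (fst r) P)" using p q unfolding flt_def by auto
      then show "x \<in> \<Union>(fst ` set (flt (fst r) P))" using p by blast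
    qed
  qed
qed

lemma sc_flt: "sc c P \<Longrightarrow> sc c (flt C P)"
  by (auto simp: sc_def flt_def)

lemma rw: "restr_word \<sigma> C = map snd (flt C \<sigma>)"
  unfolding restr_word_def flt_def by (metis case_prod_beta)

lemma concat_single:
  "k < q \<Longrightarrow> (\<forall>j<q. j \<noteq> k \<longrightarrow> f j = []) \<Longrightarrow> concat (map f [0..<q]) = f k"
proof (induction q)
  case 0
  then show ?case by simp
next
  case (Suc q)
  show ?case
  proof (cases "k = q")
    case True
    have "concat (map f [0..<q]) = []" using Suc.prems True by auto
    then show ?thesis using True by simp
  next
    case False
    then have "concat (map f [0..<q]) = f k" using Suc by auto
    moreover have "f q = []" using Suc.prems False by auto
    ultimately show ?thesis by simp
  qed
qed

lemma map_snd_Phi: "map snd (Phi s L) = map snd L"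
  by (simp add: Phi_def)

context
  fixes S :: "'a::linorder set" and c :: "'a \<Rightarrow> 'c" and \<sigma> \<pi> :: "('a set \<times> 'c) list"
  assumes finS: "finite S" and pS: "part S \<sigma>" and scS: "sc c \<sigma>" and pP: "part S \<pi>"
    and sP: "sc c \<pi>" and sp: "cprec \<sigma> \<pi>"
begin

lemma cint_iff: "L \<in> cinterval S c \<sigma> \<pi> \<longleftrightarrow> part S L \<and> sc c L \<and> cprec \<sigma> L \<and> cprec L \<pi>"
  unfolding cinterval_def using cp_iff[OF finS] by auto

lemma blk_eq: "r \<in> set \<pi> \<Longrightarrow> r' \<in> set \<pi> \<Longrightarrow> x \<in> fst r \<Longrightarrow> x \<in> fst r' \<Longrightarrow> r = r'"
  using part_inter[of \<pi>] pP unfolding part_def by blast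

lemma sig_part: "r \<in> set \<pi> \<Longrightarrow> part (fst r) (flt (fst r) \<sigma>)"
  using restrict_part[OF pS pP _] sp unfolding cprec_alt by blast

lemma flt_LI:
  assumes L: "L \<in> cinterval S c \<sigma> \<pi>" and r: "r \<in> set \<pi>"
  shows "flt (fst r) L \<in> LI (flt (fst r) \<sigma>) (fst r) c (snd r)"
proof -
  from L have pL: "part S L" and scL: "sc c L" and c1: "cprec \<sigma> L" and c2: "cprec L \<pi>"
    by (auto simp: cint_iff)
  have a: "part (fst r) (flt (fst r) L)"
    using restrict_part[OF pL pP _ r] c2 unfolding cprec_alt by blast
  have b: "cprec (flt (fst r) \<sigma>) (flt (fst r) L)"
    unfolding cprec_alt
  proof (intro conjI ballI impI)
    fix p assume p: "p \<in> set (flt (fst r) \<sigma>)"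
    hence p1: "p \<in> set \<sigma>" "fst p \<subseteq> fst r" by (auto simp: flt_def)
    then obtain q where q: "q \<in> set L" "fst p \<subseteq> fst q" using c1 unfolding cprec_alt by blast
    then obtain r' where r': "r' \<in> set \<pi>" "fst q \<subseteq> fst r'" using c2 unfolding cprec_alt by blast
    obtain x where x: "x \<in> fst p" using pS p1 unfolding part_def by fastforce
    have "r' = r" using blk_eq[OF r' (1) r, of x] x p1 q r' by blast
    hence "q \<in> set (flt (fst r) L)" using q r' by (auto simp: flt_def)
    then show "\<exists>q\<in>set (flt (fst r) L). fst p \<subseteq> fst q" using q by blast
  next
    fix p q assume "p \<in> set (flt (fst r) \<sigma>)" "q \<in> set (flt (fst r) L)" "fst p = fst q"
    then show "snd p = snd q" using c1 unfolding cprec_alt flt_def by auto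
  qed
  have d: "cprec (flt (fst r) L) [(fst r, snd r)]"
    unfolding cprec_alt
  proof (intro conjI ballI impI)
    fix p assume "p \<in> set (flt (fst r) L)"
    then show "\<exists>q\<in>set [(fst r, snd r)]. fst p \<subseteq> fst q" by (auto simp: flt_def)
  next
    fix p q assume "p \<in> set (flt (fst r) L)" "q \<in> set [(fst r, snd r)]" "fst p = fst q"
    then show "snd p = snd q" using c2 r unfolding cprec_alt flt_def by auto
  qed
  show ?thesis unfolding LI_def using a b d sc_flt[OF scL] by simp
qed

lemma split_L:
  assumes L: "L \<in> cinterval S c \<sigma> \<pi>"
  shows "concat (map (\<lambda>p. flt (fst p) L) \<pi>) = L"
proof -
  from L have pL: "part S L" and c2: "cprec L \<pi>" by (auto simp: cint_iff)
  show ?thesis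
    by (rule split_concat) (use pL pP c2 in \<open>auto simp: part_def cprec_alt\<close>)
qed

lemma cprec_flt:
  assumes L: "L \<in> cinterval S c \<sigma> \<pi>" and M: "M \<in> cinterval S c \<sigma> \<pi>"
  shows "cprec L M \<longleftrightarrow> (\<forall>r\<in>set \<pi>. cprec (flt (fst r) L) (flt (fst r) M))"
proof -
  from L have pL: "part S L" and c2: "cprec L \<pi>" by (auto simp: cint_iff)
  from M have pM: "part S M" and c2M: "cprec M \<pi>" by (auto simp: cint_iff)
  show ?thesis
  proof
    assume a: "cprec L M"
    show "\<forall>r\<in>set \<pi>. cprec (flt (fst r) L) (flt (fst r) M)"
    proof
      fix r assume r: "r \<in> set \<pi>"
      show "cprec (flt (fst r) L) (flt (fst r) M)"
        unfolding cprec_alt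
      proof (intro conjI ballI impI)
        fix p assume "p \<in> set (flt (fst r) L)"
        hence p1: "p \<in> set L" "fst p \<subseteq> fst r" by (auto simp: flt_def)
        then obtain q where q: "q \<in> set M" "fst p \<subseteq> fst q" using a unfolding cprec_alt by blast
        then obtain r' where r': "r' \<in> set \<pi>" "fst q \<subseteq> fst r'" using c2M unfolding cprec_alt by blast
        obtain x where x: "x \<in> fst p" using pL p1 unfolding part_def by fastforce
        have "r' = r" using blk_eq[OF r' (1) r, of x] x p1 q r' by blast
        hence "q \<in> set (flt (fst r) M)" using q r' by (auto simp: flt_def)
        then show "\<exists>q\<in>set (flt (fst r) M). fst p \<subseteq> fst q" using q by blast
      next
        fix p q assume "p \<in> set (flt (fst r) L)" "q \<in> set (flt (fst r) M)" "fst p = fst q"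
        then show "snd p = snd q" using a unfolding cprec_alt flt_def by auto
      qed
    qed
  next
    assume a: "\<forall>r\<in>set \<pi>. cprec (flt (fst r) L) (flt (fst r) M)"
    show "cprec L M"
      unfolding cprec_alt
    proof (intro conjI ballI impI)
      fix p assume p: "p \<in> set L"
      then obtain r where r: "r \<in> set \<pi>" "fst p \<subseteq> fst r" using c2 unfolding cprec_alt by blast
      hence "p \<in> set (flt (fst r) L)" using p by (auto simp: flt_def)
      then obtain q where "q \<in> set (flt (fst r) M)" "fst p \<subseteq> fst q"
        using a r unfolding cprec_alt by blast
      then show "\<exists>q\<in>set M. fst p \<subseteq> fst q" by (auto simp: flt_def)
    next
      fix p q assume p: "p \<in> set L" and q: "q \<in> set M" and e: "fst p = fst q"
      then obtain r where r: "r \<in> set \<pi>" "fst p \<subseteq> fst r" using c2 unfolding cprec_alt by blast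
      hence "p \<in> set (flt (fst r) L)" "q \<in> set (flt (fst r) M)" using p q e by (auto simp: flt_def)
      then show "snd p = snd q" using a r e unfolding cprec_alt by blast
    qed
  qed
qed

end


context
  fixes S :: "'a::linorder set" and c :: "'a \<Rightarrow> 'c" and \<sigma> \<pi> :: "('a set \<times> 'c) list"
  assumes finS: "finite S" and pS: "part S \<sigma>" and scS: "sc c \<sigma>" and pP: "part S \<pi>"
    and sP: "sc c \<pi>" and sp: "cprec \<sigma> \<pi>"
begin

lemma main:
  "\<exists>\<theta>. bij_betw \<theta> (cinterval S c \<sigma> \<pi>) (Yprod \<sigma> \<pi>) \<and>
           (\<forall>L \<in> cinterval S c \<sigma> \<pi>. \<forall>M \<in> cinterval S c \<sigma> \<pi>.
              cprec L M \<longleftrightarrow> list_all2 cprec (\<theta> L) (\<theta> M)) \<and>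
           (\<forall>L \<in> cinterval S c \<sigma> \<pi>. cword L = concat (map cword (\<theta> L)))"
proof -
  note ctx = finS pS scS pP sP sp
  define \<theta> where "\<theta> L = map (\<lambda>p. Phi (flt (fst p) \<sigma>) (flt (fst p) L)) \<pi>" for L
  let ?A = "cinterval S c \<sigma> \<pi>" and ?B = "Yprod \<sigma> \<pi>" and ?q = "length \<pi>"
  have ps: "part (fst r) (flt (fst r) \<sigma>)" if "r \<in> set \<pi>" for r
    using sig_part[OF ctx that] .
  have ss: "sc c (flt (fst r) \<sigma>)" for r using sc_flt[OF scS] .
  have into: "\<theta> L \<in> ?B" if L: "L \<in> ?A" for L
    unfolding Yprod_def
  proof (intro CollectI conjI allI impI)
    show "length (\<theta> L) = ?q" by (simp add: \<theta>_def)
    fix k assume k: "k < ?q"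
    have r: "\<pi> ! k \<in> set \<pi>" using k by simp
    have "\<theta> L ! k = Phi (flt (fst (\<pi> ! k)) \<sigma>) (flt (fst (\<pi> ! k)) L)" using k by (simp add: \<theta>_def)
    also have "\<dots> \<in> Yint (map snd (flt (fst (\<pi> ! k)) \<sigma>)) (snd (\<pi> ! k))"
      by (rule phi_in[OF ps[OF r] ss flt_LI[OF ctx L r]])
    finally show "\<theta> L ! k \<in> Yint (restr_word \<sigma> (fst (\<pi> ! k))) (snd (\<pi> ! k))" by (simp add: rw)
  qed
  have inj: "inj_on \<theta> ?A"
  proof (rule inj_onI)
    fix L M assume L: "L \<in> ?A" and M: "M \<in> ?A" and e: "\<theta> L = \<theta> M"
    have "flt (fst r) L = flt (fst r) M" if r: "r \<in> set \<pi>" for r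
    proof -
      have "Phi (flt (fst r) \<sigma>) (flt (fst r) L) = Phi (flt (fst r) \<sigma>) (flt (fst r) M)"
        using e r unfolding \<theta>_def by (simp add: map_eq_conv)
      note e2 = this
      have "flt (fst r) L = Psi (flt (fst r) \<sigma>) (Phi (flt (fst r) \<sigma>) (flt (fst r) L))"
        using psi_phi[OF ps[OF r] ss flt_LI[OF ctx L r]] by simp
      also have "\<dots> = Psi (flt (fst r) \<sigma>) (Phi (flt (fst r) \<sigma>) (flt (fst r) M))" unfolding e2 ..
      also have "\<dots> = flt (fst r) M"
        using psi_phi[OF ps[OF r] ss flt_LI[OF ctx M r]] by simp
      finally show ?thesis .
    qed
    hence "map (\<lambda>p. flt (fst p) L) \<pi> = map (\<lambda>p. flt (fst p) M) \<pi>" by simp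
    note e3 = this
    have "L = concat (map (\<lambda>p. flt (fst p) L) \<pi>)" using split_L[OF ctx L] by simp
    also have "\<dots> = concat (map (\<lambda>p. flt (fst p) M) \<pi>)" unfolding e3 ..
    also have "\<dots> = M" using split_L[OF ctx M] by simp
    finally show "L = M" .
  qed
  have onto: "?B \<subseteq> \<theta> ` ?A"
  proof
    fix ls assume ls: "ls \<in> ?B"
    hence len: "length ls = ?q" and lsk: "\<And>k. k < ?q \<Longrightarrow> ls ! k \<in> Yint (map snd (flt (fst (\<pi> ! k)) \<sigma>)) (snd (\<pi> ! k))"
      unfolding Yprod_def by (auto simp: rw)
    define Lk where "Lk k = Psi (flt (fst (\<pi> ! k)) \<sigma>) (ls ! k)" for k
    define L where "L = concat (map Lk [0..<?q])"
    have LkLI: "Lk k \<in> LI (flt (fst (\<pi> ! k)) \<sigma>) (fst (\<pi> ! k)) c (snd (\<pi> ! k))" if k: "k < ?q" for k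
      unfolding Lk_def using psi_in(1)[OF ps ss lsk[OF k]] k by simp
    have LkPhi: "Phi (flt (fst (\<pi> ! k)) \<sigma>) (Lk k) = ls ! k" if k: "k < ?q" for k
      unfolding Lk_def using psi_in(2)[OF ps ss lsk[OF k]] k by simp
    have pLk: "part (fst (\<pi> ! k)) (Lk k)" and scLk: "sc c (Lk k)"
      and c1k: "cprec (flt (fst (\<pi> ! k)) \<sigma>) (Lk k)" and c2k: "cprec (Lk k) [(fst (\<pi> ! k), snd (\<pi> ! k))]"
      if k: "k < ?q" for k using LkLI[OF k] unfolding LI_def by auto
    have setL: "set L = (\<Union>k\<in>{..<?q}. set (Lk k))" unfolding L_def by auto
    have inLk: "\<exists>k<?q. p \<in> set (Lk k)" if "p \<in> set L" for p using that setL by auto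
    have subk: "fst p \<subseteq> fst (\<pi> ! k)" if "k < ?q" "p \<in> set (Lk k)" for p k
      using pLk[OF that(1)] that(2) unfolding part_def by blast
    have nek: "fst p \<noteq> {}" if "k < ?q" "p \<in> set (Lk k)" for p k
      using pLk[OF that(1)] that(2) unfolding part_def by blast
    have disjk: "j = k" if "j < ?q" "k < ?q" "x \<in> fst (\<pi> ! j)" "x \<in> fst (\<pi> ! k)" for j k x
      using part_inter_nth[of \<pi> j k x] pP that unfolding part_def by blast
    have pL: "part S L"
      unfolding part_def
    proof (intro conjI)
      show "\<forall>p\<in>set L. finite (fst p) \<and> fst p \<noteq> {}"
      proof
        fix p assume "p \<in> set L"
        then obtain k where k: "k < ?q" "p \<in> set (Lk k)" using inLk by blast
        then show "finite (fst p) \<and> fst p \<noteq> {}" using pLk[OF k(1)] unfolding part_def by blast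
      qed
      show "\<Union>(fst ` set L) = S"
      proof
        show "\<Union>(fst ` set L) \<subseteq> S"
        proof
          fix x assume "x \<in> \<Union>(fst ` set L)"
          then obtain p where p: "p \<in> set L" "x \<in> fst p" by blast
          then obtain k where k: "k < ?q" "p \<in> set (Lk k)" using inLk by blast
          have "x \<in> fst (\<pi> ! k)" using subk[OF k] p by blast
          then show "x \<in> S" using pP k(1) nth_mem unfolding part_def by blast
        qed
        show "S \<subseteq> \<Union>(fst ` set L)"
        proof
          fix x assume "x \<in> S"
          then obtain r where r: "r \<in> set \<pi>" "x \<in> fst r" using pP unfolding part_def by blast
          then obtain k where k: "k < ?q" "r = \<pi> ! k" by (auto simp: in_set_conv_nth)
          then obtain p where "p \<in> set (Lk k)" "x \<in> fst p" using pLk[OF k(1)] r unfolding part_def by blast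
          then show "x \<in> \<Union>(fst ` set L)" using setL k by blast
        qed
      qed
      show "sorted_wrt before L"
        unfolding L_def sorted_wrt_concat
      proof (intro conjI ballI)
        fix xs assume "xs \<in> set (map Lk [0..<?q])"
        then obtain k where k: "k < ?q" "xs = Lk k" by auto
        then show "sorted_wrt before xs" using pLk[OF k(1)] unfolding part_def by blast
      next
        show "sorted_wrt (\<lambda>xs ys. \<forall>x\<in>set xs. \<forall>y\<in>set ys. before x y) (map Lk [0..<?q])"
          unfolding sorted_wrt_iff_nth_less
        proof (intro allI impI ballI)
          fix i j x y assume ij: "i < j" "j < length (map Lk [0..<?q])"
            and x: "x \<in> set (map Lk [0..<?q] ! i)" and y: "y \<in> set (map Lk [0..<?q] ! j)"
          have j: "j < ?q" using ij by simp
          have i: "i < ?q" using ij by simp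
          have x': "x \<in> set (Lk i)" using x i by simp
          have y': "y \<in> set (Lk j)" using y j by simp
          have "before (\<pi> ! i) (\<pi> ! j)" using pP ij j unfolding part_def
            by (simp add: sorted_wrt_nth_less)
          then show "before x y" using subk[OF i x'] subk[OF j y'] unfolding before_def by blast
        qed
      qed
    qed
    have scL: "sc c L" unfolding sc_def
    proof (intro allI impI)
      fix x col assume "({x}, col) \<in> set L"
      then obtain k where k: "k < ?q" "({x}, col) \<in> set (Lk k)" using inLk by blast
      then show "col = c x" using scLk[OF k(1)] unfolding sc_def by blast
    qed
    have c1: "cprec \<sigma> L" unfolding cprec_alt
    proof (intro conjI ballI impI)
      fix p assume p: "p \<in> set \<sigma>"
      then obtain r where r: "r \<in> set \<pi>" "fst p \<subseteq> fst r" using sp unfolding cprec_alt by blast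
      then obtain k where k: "k < ?q" "r = \<pi> ! k" by (auto simp: in_set_conv_nth)
      have "p \<in> set (flt (fst (\<pi> ! k)) \<sigma>)" using p r k by (auto simp: flt_def)
      then obtain q where "q \<in> set (Lk k)" "fst p \<subseteq> fst q" using c1k[OF k(1)] unfolding cprec_alt by blast
      then show "\<exists>q\<in>set L. fst p \<subseteq> fst q" using setL k by blast
    next
      fix p q assume p: "p \<in> set \<sigma>" and q: "q \<in> set L" and e: "fst p = fst q"
      then obtain k where k: "k < ?q" "q \<in> set (Lk k)" using inLk by blast
      have "p \<in> set (flt (fst (\<pi> ! k)) \<sigma>)" using p e subk[OF k] by (auto simp: flt_def)
      then show "snd p = snd q" using c1k[OF k(1)] k e unfolding cprec_alt by blast
    qed
    have c2: "cprec L \<pi>" unfolding cprec_alt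
    proof (intro conjI ballI impI)
      fix p assume "p \<in> set L"
      then obtain k where k: "k < ?q" "p \<in> set (Lk k)" using inLk by blast
      then show "\<exists>r\<in>set \<pi>. fst p \<subseteq> fst r" using subk[OF k] nth_mem[OF k(1)] by blast
    next
      fix p r assume p: "p \<in> set L" and r: "r \<in> set \<pi>" and e: "fst p = fst r"
      then obtain k where k: "k < ?q" "p \<in> set (Lk k)" using inLk by blast
      obtain j where j: "j < ?q" "r = \<pi> ! j" using r by (auto simp: in_set_conv_nth)
      obtain x where x: "x \<in> fst p" using nek[OF k] by blast
      have "j = k" using disjk[OF j(1) k(1), of x] x e j subk[OF k] by blast
      then show "snd p = snd r" using c2k[OF k(1)] k j e unfolding cprec_alt by auto
    qed
    have LA: "L \<in> ?A" unfolding cint_iff[OF ctx] using pL scL c1 c2 by simp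
    have fltL: "flt (fst (\<pi> ! k)) L = Lk k" if k: "k < ?q" for k
    proof -
      have "flt (fst (\<pi> ! k)) L = concat (map (\<lambda>j. flt (fst (\<pi> ! k)) (Lk j)) [0..<?q])"
        unfolding L_def flt_def by (simp add: filter_concat map_map o_def)
      also have "\<dots> = flt (fst (\<pi> ! k)) (Lk k)"
      proof (rule concat_single[OF k], intro allI impI)
        fix j assume j: "j < ?q" "j \<noteq> k"
        show "flt (fst (\<pi> ! k)) (Lk j) = []"
          unfolding flt_def filter_empty_conv
        proof (intro ballI)
          fix p assume p: "p \<in> set (Lk j)"
          obtain x where x: "x \<in> fst p" using nek[OF j(1) p] by blast
          show "\<not> fst p \<subseteq> fst (\<pi> ! k)"
            using disjk[OF j(1) k, of x] x subk[OF j(1) p] j by blast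
        qed
      qed
      also have "\<dots> = Lk k" unfolding flt_def using subk[OF k] by (simp add: filter_id_conv)
      finally show ?thesis .
    qed
    have "\<theta> L = ls"
    proof (rule nth_equalityI)
      show "length (\<theta> L) = length ls" using len by (simp add: \<theta>_def)
      fix k assume "k < length (\<theta> L)"
      hence k: "k < ?q" by (simp add: \<theta>_def)
      have "\<theta> L ! k = Phi (flt (fst (\<pi> ! k)) \<sigma>) (flt (fst (\<pi> ! k)) L)" using k by (simp add: \<theta>_def)
      also have "\<dots> = ls ! k" using fltL[OF k] LkPhi[OF k] by simp
      finally show "\<theta> L ! k = ls ! k" .
    qed
    then show "ls \<in> \<theta> ` ?A" using LA by blast
  qed
  have bij: "bij_betw \<theta> ?A ?B"
    unfolding bij_betw_def using inj into onto by blast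
  have ord: "cprec L M \<longleftrightarrow> list_all2 cprec (\<theta> L) (\<theta> M)" if L: "L \<in> ?A" and M: "M \<in> ?A" for L M
  proof -
    have "cprec L M \<longleftrightarrow> (\<forall>r\<in>set \<pi>. cprec (flt (fst r) L) (flt (fst r) M))"
      by (rule cprec_flt[OF ctx L M])
    also have "\<dots> \<longleftrightarrow> (\<forall>r\<in>set \<pi>. cprec (Phi (flt (fst r) \<sigma>) (flt (fst r) L)) (Phi (flt (fst r) \<sigma>) (flt (fst r) M)))"
    proof (rule ball_cong[OF refl])
      fix r assume r: "r \<in> set \<pi>"
      show "cprec (flt (fst r) L) (flt (fst r) M) \<longleftrightarrow> cprec (Phi (flt (fst r) \<sigma>) (flt (fst r) L)) (Phi (flt (fst r) \<sigma>) (flt (fst r) M))"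
        by (rule order_iso[OF ps[OF r] ss flt_LI[OF ctx L r] flt_LI[OF ctx M r]])
    qed
    also have "\<dots> \<longleftrightarrow> list_all2 cprec (\<theta> L) (\<theta> M)"
      unfolding \<theta>_def list_all2_map1 list_all2_map2 list_all2_same by simp
    finally show ?thesis .
  qed
  have cw: "cword L = concat (map cword (\<theta> L))" if L: "L \<in> ?A" for L
  proof -
    have "cword L = map snd (concat (map (\<lambda>p. flt (fst p) L) \<pi>))"
      using split_L[OF ctx L] by (simp add: cword_def)
    also have "\<dots> = concat (map cword (\<theta> L))"
      unfolding \<theta>_def cword_def by (simp add: map_concat map_snd_Phi o_def)
    finally show ?thesis .
  qed
  show ?thesis
    apply (rule exI[of _ \<theta>])
    using bij ord cw by blast
qed

end

theorem lemma1:
  fixes S :: "'a::linorder set" and c :: "'a \<Rightarrow> 'c"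
    and \<sigma> \<pi> :: "('a set \<times> 'c) list"
  assumes "finite (UNIV :: 'c set)" and "finite S"
    and "\<sigma> \<in> colored_partitions S c" and "\<pi> \<in> colored_partitions S c"
    and "cprec \<sigma> \<pi>"
  shows "\<exists>\<theta>. bij_betw \<theta> (cinterval S c \<sigma> \<pi>) (Yprod \<sigma> \<pi>) \<and>
           (\<forall>L \<in> cinterval S c \<sigma> \<pi>. \<forall>M \<in> cinterval S c \<sigma> \<pi>.
              cprec L M \<longleftrightarrow> list_all2 cprec (\<theta> L) (\<theta> M)) \<and>
           (\<forall>L \<in> cinterval S c \<sigma> \<pi>. cword L = concat (map cword (\<theta> L)))"
proof -
  have "part S \<sigma>" "sc c \<sigma>" "part S \<pi>" "sc c \<pi>"
    using assms(3,4) cp_iff[OF assms(2)] by auto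
  then show ?thesis using main[OF assms(2) _ _ _ _ assms(5)] by blast
qed


end
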